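(* There exists $C\in(0,\infty)$ such that for all $N\in\mathbb N$, $\lambda\in(0,\infty)$, $n\in\mathbb N$ with $U_{N,\lambda}(n)>0$, and $M>0$, $$\sum_{x\in\mathbb Z^d:\,|x|>M\sqrt n}\frac{\mathbf U_{N,\lambda}(n,x)}{U_{N,\lambda}(n)}\le\frac{C}{M^2}.$$
   Context: Setting: $d\in\mathbb N$, $\mathsf c>0$; positive $r(n)=\frac an(1+o(1))$, $R_N=\sum_{n\le N}r(n)$; probability kernels $p(n,\cdot)$ on $\mathbb Z^d$ with (i) $\sum_xx_ip(n,x)=0$ for each $i$, (ii) $\sum_x|x|^2p(n,x)=O(n)$, (iii) $\sup_x|n^{d/2}p(n,x)-g_{\mathsf c}(x/\sqrt n)|=o(1)$ with $g_t(x)=(2\pi t)^{-d/2}e^{-|x|^2/(2t)}$. $(T^{(N)}_i,X^{(N)}_i)$ i.i.d. with law $\frac{r(n)p(n,x)}{R_N}\mathbf1_{\{1,\dots,N\}}(n)$; $\tau^{(N)}_k$, $S^{(N)}_k$ their partial sums. $\mathbf U_{N,\lambda}(n,x):=\sum_{k\ge0}\lambda^k\P(\tau^{(N)}_k=n,S^{(N)}_k=x)$ and $U_{N,\lambda}(n):=\sum_{k\ge0}\lambda^k\P(\tau^{(N)}_k=n)=\sum_x\mathbf U_{N,\lambda}(n,x)$. *)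

theory Defs
  imports "HOL-Analysis.Analysis"
begin

text \<open>Points of Z^d are functions from a finite index type 'd (with d = CARD('d)) to int.\<close>

definition znorm :: "('d::finite \<Rightarrow> int) \<Rightarrow> real" where
  "znorm x = sqrt (\<Sum>i\<in>UNIV. (real_of_int (x i))^2)"

definition gauss_at :: "real \<Rightarrow> nat \<Rightarrow> ('d::finite \<Rightarrow> int) \<Rightarrow> real" where
  "gauss_at t n x = (2 * pi * t) powr (- real CARD('d) / 2)
      * exp (- ((\<Sum>i\<in>UNIV. (real_of_int (x i) / sqrt (real n))^2)) / (2 * t))"

definition RR :: "(nat \<Rightarrow> real) \<Rightarrow> nat \<Rightarrow> real" where
  "RR r N = (\<Sum>n=1..N. r n)"

text \<open>Joint law of (T^(N), X^(N)): r(n) p(n,x) / R_N on {1..N} x Z^d.\<close>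
definition stepLaw :: "(nat \<Rightarrow> real) \<Rightarrow> (nat \<Rightarrow> ('d::finite \<Rightarrow> int) \<Rightarrow> real) \<Rightarrow> nat
    \<Rightarrow> nat \<Rightarrow> ('d \<Rightarrow> int) \<Rightarrow> real" where
  "stepLaw r p N n x = (if 1 \<le> n \<and> n \<le> N then r n * p n x / RR r N else 0)"

text \<open>Law of (tau_k, S_k): k-fold convolution power of the step law
  (law of the sum of k i.i.d. copies; tau_{k+1} = tau_k + T_{k+1}).\<close>
fun convPow :: "(nat \<Rightarrow> ('d::finite \<Rightarrow> int) \<Rightarrow> real) \<Rightarrow> nat \<Rightarrow> nat \<Rightarrow> ('d \<Rightarrow> int) \<Rightarrow> real" where
  "convPow q 0 = (\<lambda>n x. if n = 0 \<and> x = (\<lambda>_. 0) then 1 else 0)"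
| "convPow q (Suc k) = (\<lambda>n x. \<Sum>m\<le>n. infsum (\<lambda>y. convPow q k m y * q (n - m) (\<lambda>i. x i - y i)) UNIV)"

definition probTS :: "(nat \<Rightarrow> real) \<Rightarrow> (nat \<Rightarrow> ('d::finite \<Rightarrow> int) \<Rightarrow> real) \<Rightarrow> nat
    \<Rightarrow> nat \<Rightarrow> nat \<Rightarrow> ('d \<Rightarrow> int) \<Rightarrow> real" where
  "probTS r p N k n x = convPow (stepLaw r p N) k n x"

definition probT :: "(nat \<Rightarrow> real) \<Rightarrow> (nat \<Rightarrow> ('d::finite \<Rightarrow> int) \<Rightarrow> real) \<Rightarrow> nat
    \<Rightarrow> nat \<Rightarrow> nat \<Rightarrow> real" where
  "probT r p N k n = infsum (\<lambda>x. probTS r p N k n x) UNIV"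

definition UU :: "(nat \<Rightarrow> real) \<Rightarrow> (nat \<Rightarrow> ('d::finite \<Rightarrow> int) \<Rightarrow> real) \<Rightarrow> nat \<Rightarrow> real
    \<Rightarrow> nat \<Rightarrow> ('d \<Rightarrow> int) \<Rightarrow> real" where
  "UU r p N lam n x = (\<Sum>k. lam ^ k * probTS r p N k n x)"

definition U :: "(nat \<Rightarrow> real) \<Rightarrow> (nat \<Rightarrow> ('d::finite \<Rightarrow> int) \<Rightarrow> real) \<Rightarrow> nat \<Rightarrow> real
    \<Rightarrow> nat \<Rightarrow> real" where
  "U r p N lam n = (\<Sum>k. lam ^ k * probT r p N k n)"

end

theory Submission
  imports Defs
begin

lemma has_sum_sum_fun:
  fixes f :: "'i \<Rightarrow> 'a \<Rightarrow> real"
  assumes "finite I" "\<And>i. i \<in> I \<Longrightarrow> (f i has_sum s i) A"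
  shows "((\<lambda>x. \<Sum>i\<in>I. f i x) has_sum (\<Sum>i\<in>I. s i)) A"
  using assms by (induction I rule: finite_induct) (auto intro!: has_sum_add)

definition sqn :: "('d::finite \<Rightarrow> int) \<Rightarrow> real" where
  "sqn x = (\<Sum>i\<in>UNIV. (real_of_int (x i))^2)"

lemma sqn_nonneg: "sqn x \<ge> 0" unfolding sqn_def by (simp add: sum_nonneg)
lemma znorm_sq: "(znorm x)^2 = sqn x" unfolding znorm_def sqn_def by (simp add: sum_nonneg)

lemma sqn_add: "sqn (\<lambda>i. y i + z i) = sqn y + 2 * (\<Sum>i\<in>UNIV. real_of_int (y i) * real_of_int (z i)) + sqn z"
  unfolding sqn_def by (simp add: power2_sum sum.distrib sum_distrib_left algebra_simps)

lemma conv_has_sum: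
  fixes Q q :: "('d::finite \<Rightarrow> int) \<Rightarrow> real" and w :: "('d \<Rightarrow> int) \<Rightarrow> real"
  assumes Qnn: "\<And>y. Q y \<ge> 0" and qnn: "\<And>z. q z \<ge> 0" and wnn: "\<And>x. w x \<ge> 0"
    and h: "\<And>y. ((\<lambda>z. Q y * q z * w (\<lambda>i. y i + z i)) has_sum h y) UNIV"
    and hs: "(h has_sum S) UNIV"
  shows "((\<lambda>x. w x * infsum (\<lambda>y. Q y * q (\<lambda>i. x i - y i)) UNIV) has_sum S) UNIV"
proof -
  define F where "F = (\<lambda>(y::'d\<Rightarrow>int,z::'d\<Rightarrow>int). Q y * q z * w (\<lambda>i. y i + z i))"
  have Fnn: "F yz \<ge> 0" for yz
    unfolding F_def using Qnn qnn wnn by (auto simp: case_prod_unfold)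
  have Fs: "F summable_on (UNIV \<times> UNIV)"
    by (rule summable_on_SigmaI[where g=h]) (use h hs Fnn in \<open>auto simp: F_def summable_on_def\<close>)
  have FS: "(F has_sum S) (UNIV \<times> UNIV)"
    by (rule has_sum_SigmaI[where g=h]) (use h hs Fs in \<open>auto simp: F_def\<close>)
  define G where "G = (\<lambda>x y. w x * (Q y * q (\<lambda>i. x i - y i)))"
  have GS: "((\<lambda>(x,y). G x y) has_sum S) (UNIV \<times> UNIV)"
  proof -
    have "((\<lambda>(x,y). G x y) has_sum S) (UNIV \<times> UNIV) = (F has_sum S) (UNIV \<times> UNIV)"
      by (rule has_sum_reindex_bij_witness[where j="\<lambda>(x,y). (y, \<lambda>i. x i - y i)"
            and i="\<lambda>(y,z). (\<lambda>k. y k + z k, y)"]) (auto simp: F_def G_def)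
    with FS show ?thesis by simp
  qed
  have slice: "G x summable_on UNIV" for x
    using summable_on_SigmaD1[of G UNIV "\<lambda>_. UNIV" x] GS by (auto simp: summable_on_def)
  have "((\<lambda>x. infsum (G x) UNIV) has_sum S) UNIV"
    by (rule has_sum_SigmaD[OF GS]) (use slice in auto)
  moreover have "infsum (G x) UNIV = w x * infsum (\<lambda>y. Q y * q (\<lambda>i. x i - y i)) UNIV" for x
    unfolding G_def by (rule infsum_cmult_right')
  ultimately show ?thesis by simp
qed

lemma sq_slice:
  fixes q :: "('d::finite \<Rightarrow> int) \<Rightarrow> real"
  assumes qP: "(q has_sum P) UNIV"
    and qV: "((\<lambda>z. sqn z * q z) has_sum V) UNIV"
    and qM: "\<And>i. ((\<lambda>z. real_of_int (z i) * q z) has_sum 0) UNIV"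
  shows "((\<lambda>z. c * q z * sqn (\<lambda>i. y i + z i)) has_sum c * (sqn y * P + V)) UNIV"
proof -
  have m: "((\<lambda>z. \<Sum>i\<in>UNIV. real_of_int (y i) * (real_of_int (z i) * q z)) has_sum (\<Sum>i\<in>UNIV. real_of_int (y i) * 0)) UNIV"
  proof (rule has_sum_sum_fun)
    fix i :: 'd
    show "((\<lambda>z. real_of_int (y i) * (real_of_int (z i) * q z)) has_sum real_of_int (y i) * 0) UNIV"
      by (rule has_sum_cmult_right[OF qM])
  qed simp
  have "((\<lambda>z. sqn y * q z + 2 * (\<Sum>i\<in>UNIV. real_of_int (y i) * (real_of_int (z i) * q z)) + sqn z * q z)
      has_sum (sqn y * P + 2 * 0 + V)) UNIV"
    by (intro has_sum_add has_sum_cmult_right qP qV) (use m in simp)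
  then have "((\<lambda>z. c * (sqn y * q z + 2 * (\<Sum>i\<in>UNIV. real_of_int (y i) * (real_of_int (z i) * q z)) + sqn z * q z))
      has_sum c * (sqn y * P + V)) UNIV"
    by (auto dest: has_sum_cmult_right)
  moreover have "(\<lambda>z. c * q z * sqn (\<lambda>i. y i + z i)) = (\<lambda>z. c * (sqn y * q z + 2 * (\<Sum>i\<in>UNIV. real_of_int (y i) * (real_of_int (z i) * q z)) + sqn z * q z))"
    unfolding sqn_add by (simp add: algebra_simps sum_distrib_left sum_distrib_right)
  ultimately show ?thesis by (simp only:)
qed

lemma conv_inv:
  fixes q :: "nat \<Rightarrow> ('d::finite \<Rightarrow> int) \<Rightarrow> real" and P V :: "nat \<Rightarrow> real" and K :: real
  assumes qnn: "\<And>l z. q l z \<ge> 0"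
    and qP: "\<And>l. (q l has_sum P l) UNIV"
    and qM: "\<And>l i. ((\<lambda>z. real_of_int (z i) * q l z) has_sum 0) UNIV"
    and qV: "\<And>l. ((\<lambda>z. sqn z * q l z) has_sum V l) UNIV"
    and qVb: "\<And>l. V l \<le> K * real l * P l"
    and q0: "\<And>z. q 0 z = 0"
  shows "(\<forall>n x. 0 \<le> convPow q k n x) \<and>
    (\<forall>n. convPow q k n summable_on UNIV \<and> (\<lambda>x. sqn x * convPow q k n x) summable_on UNIV
       \<and> infsum (\<lambda>x. sqn x * convPow q k n x) UNIV \<le> K * real n * infsum (convPow q k n) UNIV)
    \<and> (\<forall>n x. n < k \<longrightarrow> convPow q k n x = 0)"
proof (induction k)
  case 0
  have nn: "0 \<le> convPow q 0 n x" for n x by simp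
  have fin: "finite {x\<in>UNIV. f x \<noteq> 0}" if "\<And>x. x \<noteq> (\<lambda>_. 0) \<Longrightarrow> f x = 0" for f :: "('d \<Rightarrow> int) \<Rightarrow> real"
    by (rule finite_subset[of _ "{\<lambda>_. 0}"]) (use that in auto)
  have s1: "convPow q 0 n summable_on UNIV" for n
    by (rule finite_nonzero_values_imp_summable_on, rule fin) simp
  have z: "(\<lambda>x. sqn x * convPow q 0 n x) = (\<lambda>_. 0)" for n
    by (auto simp: sqn_def)
  have b: "infsum (\<lambda>x. sqn x * convPow q 0 n x) UNIV \<le> K * real n * infsum (convPow q 0 n) UNIV" for n
  proof (cases "n = 0")
    case True then show ?thesis by (simp only: z) simp
  next
    case False then have "convPow q 0 n = (\<lambda>_. 0)" by auto
    then show ?thesis by (simp only: z) simp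
  qed
  have s2: "(\<lambda>x. sqn x * convPow q 0 n x) summable_on UNIV" for n
    by (simp only: z) simp
  show ?case using nn s1 s2 b by blast
next
  case (Suc k)
  define Q where "Q = convPow q k"
  have Qnn: "\<And>n x. 0 \<le> Q n x" and Qs: "\<And>n. Q n summable_on UNIV"
    and QVs: "\<And>n. (\<lambda>x. sqn x * Q n x) summable_on UNIV"
    and QVb: "\<And>n. infsum (\<lambda>x. sqn x * Q n x) UNIV \<le> K * real n * infsum (Q n) UNIV"
    and Q0: "\<And>n x. n < k \<Longrightarrow> Q n x = 0"
    using Suc.IH unfolding Q_def by auto
  define T where "T n = infsum (Q n) UNIV" for n
  define W where "W n = infsum (\<lambda>x. sqn x * Q n x) UNIV" for n
  have Tnn: "T n \<ge> 0" for n unfolding T_def by (rule infsum_nonneg) (use Qnn in auto)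
  have Pnn: "P l \<ge> 0" for l by (rule has_sum_nonneg[OF qP]) (use qnn in auto)
  have eq: "convPow q (Suc k) n x = (\<Sum>m\<le>n. infsum (\<lambda>y. Q m y * q (n - m) (\<lambda>i. x i - y i)) UNIV)" for n x
    by (simp add: Q_def)
  have nn: "0 \<le> convPow q (Suc k) n x" for n x
    unfolding eq by (intro sum_nonneg infsum_nonneg mult_nonneg_nonneg Qnn qnn)
  have H1: "((\<lambda>x. 1 * infsum (\<lambda>y. Q m y * q l (\<lambda>i. x i - y i)) UNIV) has_sum T m * P l) UNIV" for m l
  proof (rule conv_has_sum[where h="\<lambda>y. Q m y * P l"])
    show "((\<lambda>z. Q m y * q l z * 1) has_sum Q m y * P l) UNIV" for y
      using has_sum_cmult_right[OF qP[of l], where c="Q m y"] by simp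
    show "((\<lambda>y. Q m y * P l) has_sum T m * P l) UNIV"
      unfolding T_def by (rule has_sum_cmult_left) (use Qs in simp)
  qed (use Qnn qnn in auto)
  have H2: "((\<lambda>x. sqn x * infsum (\<lambda>y. Q m y * q l (\<lambda>i. x i - y i)) UNIV) has_sum W m * P l + T m * V l) UNIV" for m l
  proof (rule conv_has_sum[where h="\<lambda>y. Q m y * (sqn y * P l + V l)"])
    show "((\<lambda>z. Q m y * q l z * sqn (\<lambda>i. y i + z i)) has_sum Q m y * (sqn y * P l + V l)) UNIV" for y
      by (rule sq_slice[OF qP qV qM])
    have "((\<lambda>y. sqn y * Q m y * P l + Q m y * V l) has_sum W m * P l + T m * V l) UNIV"
      unfolding T_def W_def by (intro has_sum_add has_sum_cmult_left) (use Qs QVs in simp_all)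
    then show "((\<lambda>y. Q m y * (sqn y * P l + V l)) has_sum W m * P l + T m * V l) UNIV"
      by (simp add: algebra_simps)
  qed (use Qnn qnn sqn_nonneg in auto)
  have S1: "(convPow q (Suc k) n has_sum (\<Sum>m\<le>n. T m * P (n - m))) UNIV" for n
    unfolding eq using has_sum_sum_fun[of "{..n}" "\<lambda>m x. 1 * infsum (\<lambda>y. Q m y * q (n - m) (\<lambda>i. x i - y i)) UNIV"]
      H1 by simp
  have S2: "((\<lambda>x. sqn x * convPow q (Suc k) n x) has_sum (\<Sum>m\<le>n. W m * P (n - m) + T m * V (n - m))) UNIV" for n
    unfolding eq sum_distrib_left using has_sum_sum_fun[of "{..n}" "\<lambda>m x. sqn x * infsum (\<lambda>y. Q m y * q (n - m) (\<lambda>i. x i - y i)) UNIV"]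
      H2 by simp
  have bnd: "(\<Sum>m\<le>n. W m * P (n - m) + T m * V (n - m)) \<le> K * real n * (\<Sum>m\<le>n. T m * P (n - m))" for n
    unfolding sum_distrib_left
  proof (rule sum_mono)
    fix m assume "m \<in> {..n}"
    then have mn: "real (n - m) = real n - real m" by auto
    have "W m * P (n - m) \<le> (K * real m * T m) * P (n - m)"
      using QVb[of m] Pnn unfolding W_def T_def by (intro mult_right_mono) auto
    moreover have "T m * V (n - m) \<le> T m * (K * real (n - m) * P (n - m))"
      using qVb Tnn by (intro mult_left_mono) auto
    ultimately show "W m * P (n - m) + T m * V (n - m) \<le> K * real n * (T m * P (n - m))"
      unfolding mn by (simp add: algebra_simps)
  qed
  have van: "convPow q (Suc k) n x = 0" if "n < Suc k" for n x
    unfolding eq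
  proof (rule sum.neutral, rule ballI)
    fix m assume "m \<in> {..n}"
    then have "m = n \<or> m < k" using that by auto
    then have "(\<lambda>y. Q m y * q (n - m) (\<lambda>i. x i - y i)) = (\<lambda>_. 0)"
      using q0 Q0 by auto
    then show "infsum (\<lambda>y. Q m y * q (n - m) (\<lambda>i. x i - y i)) UNIV = 0" by simp
  qed
  have I1: "infsum (convPow q (Suc k) n) UNIV = (\<Sum>m\<le>n. T m * P (n - m))" for n
    using S1 by (rule infsumI)
  have I2: "infsum (\<lambda>x. sqn x * convPow q (Suc k) n x) UNIV = (\<Sum>m\<le>n. W m * P (n - m) + T m * V (n - m))" for n
    using S2 by (rule infsumI)
  show ?case
  proof (intro conjI allI impI)
    fix n x show "0 \<le> convPow q (Suc k) n x" by (rule nn)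
  next
    fix n show "convPow q (Suc k) n summable_on UNIV" using S1 by (auto simp: summable_on_def)
  next
    fix n show "(\<lambda>x. sqn x * convPow q (Suc k) n x) summable_on UNIV" using S2 by (auto simp: summable_on_def)
  next
    fix n show "infsum (\<lambda>x. sqn x * convPow q (Suc k) n x) UNIV \<le> K * real n * infsum (convPow q (Suc k) n) UNIV"
      unfolding I1 I2 by (rule bnd)
  next
    fix n x assume "n < Suc k" then show "convPow q (Suc k) n x = 0" by (rule van)
  qed
qed

theorem mainTheorem9:
  fixes r :: "nat \<Rightarrow> real" and a c :: real
    and p :: "nat \<Rightarrow> ('d::finite \<Rightarrow> int) \<Rightarrow> real"
  assumes c_pos: "c > 0"
    and a_pos: "a > 0"
    and r_pos: "\<And>n. r n > 0"
    and r_asymp: "(\<lambda>n. real n * r n / a) \<longlonglongrightarrow> 1"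
    and p_nonneg: "\<And>n x. n \<ge> 1 \<Longrightarrow> p n x \<ge> 0"
    and p_prob: "\<And>n. n \<ge> 1 \<Longrightarrow> (p n has_sum 1) UNIV"
    and p_mean: "\<And>n i. n \<ge> 1 \<Longrightarrow> ((\<lambda>x. real_of_int (x i) * p n x) has_sum 0) UNIV"
    and p_var: "\<exists>K. \<forall>n\<ge>1. (\<lambda>x. (znorm x)^2 * p n x) summable_on UNIV
                    \<and> infsum (\<lambda>x. (znorm x)^2 * p n x) UNIV \<le> K * real n"
    and p_llt: "\<And>\<epsilon>. \<epsilon> > 0 \<Longrightarrow> \<forall>\<^sub>F n in sequentially. \<forall>x.
                  \<bar>real n powr (real CARD('d) / 2) * p n x - gauss_at c n x\<bar> \<le> \<epsilon>"
  shows "\<exists>C::real. C > 0 \<and> (\<forall>N lam n M. lam > 0 \<longrightarrow> U r p N lam n > 0 \<longrightarrow> M > 0 \<longrightarrow>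
           infsum (\<lambda>x. UU r p N lam n x / U r p N lam n) {x. znorm x > M * sqrt (real n)}
             \<le> C / M^2)"
proof -
  obtain K where K: "\<And>n. n \<ge> 1 \<Longrightarrow> (\<lambda>x. sqn x * p n x) summable_on UNIV
                    \<and> infsum (\<lambda>x. sqn x * p n x) UNIV \<le> K * real n"
    using p_var unfolding znorm_sq by blast
  define C where "C = max K 0 + 1"
  have Cpos: "C > 0" unfolding C_def by simp
  show ?thesis
  proof (intro exI[of _ C] conjI allI impI Cpos)
    fix N :: nat and lam :: real and n :: nat and M :: real
    assume lam: "lam > 0" and Upos: "U r p N lam n > 0" and Mpos: "M > 0"
    define q where "q = stepLaw r p N"
    define RN where "RN = RR r N"
    define P where "P l = (if 1 \<le> l \<and> l \<le> N then r l / RN else 0)" for l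
    define V where "V l = (if 1 \<le> l \<and> l \<le> N then r l / RN * infsum (\<lambda>x. sqn x * p l x) UNIV else 0)" for l
    have RNpos: "RN > 0" if "1 \<le> N"
      unfolding RN_def RR_def using that r_pos by (intro sum_pos) auto
    have qeq: "q l = (if 1 \<le> l \<and> l \<le> N then (\<lambda>x. r l / RN * p l x) else (\<lambda>_. 0))" for l
      by (auto simp: q_def stepLaw_def RN_def)
    have qnn: "q l z \<ge> 0" for l z
      using RNpos r_pos[of l] p_nonneg[of l z] unfolding qeq by (auto intro!: mult_nonneg_nonneg)
    have qP: "(q l has_sum P l) UNIV" for l
      unfolding qeq P_def using has_sum_cmult_right[OF p_prob[of l], where c="r l / RN"] by auto
    have qM: "((\<lambda>z. real_of_int (z i) * q l z) has_sum 0) UNIV" for l i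
    proof (cases "1 \<le> l \<and> l \<le> N")
      case True
      have "((\<lambda>z. r l / RN * (real_of_int (z i) * p l z)) has_sum r l / RN * 0) UNIV"
        by (rule has_sum_cmult_right) (use p_mean True in auto)
      then show ?thesis using True unfolding qeq by (simp add: algebra_simps)
    next
      case False then have "q l = (\<lambda>_. 0)" by (simp only: qeq if_not_P[OF False] if_False)
      then show ?thesis by simp
    qed
    have qV: "((\<lambda>z. sqn z * q l z) has_sum V l) UNIV" for l
    proof (cases "1 \<le> l \<and> l \<le> N")
      case True
      have "((\<lambda>z. r l / RN * (sqn z * p l z)) has_sum r l / RN * infsum (\<lambda>x. sqn x * p l x) UNIV) UNIV"
        using True K[of l] by (intro has_sum_cmult_right has_sum_infsum) auto
      then show ?thesis using True unfolding qeq V_def by (simp add: algebra_simps)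
    next
      case False then have "q l = (\<lambda>_. 0)" by (simp only: qeq if_not_P[OF False] if_False)
      moreover have "V l = 0" using False by (simp only: V_def if_not_P[OF False] if_False)
      ultimately show ?thesis by simp
    qed
    have qVb: "V l \<le> K * real l * P l" for l
    proof (cases "1 \<le> l \<and> l \<le> N")
      case True
      have "r l / RN * infsum (\<lambda>x. sqn x * p l x) UNIV \<le> r l / RN * (K * real l)"
        using True K[of l] RNpos r_pos[of l] by (intro mult_left_mono) auto
      then show ?thesis using True unfolding V_def P_def by (simp add: algebra_simps)
    qed (auto simp: V_def P_def)
    have q0: "q 0 z = 0" for z by (simp add: qeq)
    note inv = conv_inv[OF qnn qP qM qV qVb q0]
    define Q where "Q = convPow q"
    have Qnn: "\<And>k n x. 0 \<le> Q k n x" and Qs: "\<And>k n. Q k n summable_on UNIV"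
      and QVs: "\<And>k n. (\<lambda>x. sqn x * Q k n x) summable_on UNIV"
      and QVb: "\<And>k n. infsum (\<lambda>x. sqn x * Q k n x) UNIV \<le> K * real n * infsum (Q k n) UNIV"
      and Q0: "\<And>k n x. n < k \<Longrightarrow> Q k n x = 0"
      using inv unfolding Q_def by auto
    have Q0f: "\<And>k n. n < k \<Longrightarrow> Q k n = (\<lambda>_. 0)" using Q0 by auto
    have UUeq: "UU r p N lam n x = (\<Sum>k\<le>n. lam ^ k * Q k n x)" for x
      unfolding UU_def probTS_def Q_def[symmetric] q_def[symmetric]
      by (rule suminf_finite) (auto simp: Q0)
    have Ueq: "U r p N lam n = (\<Sum>k\<le>n. lam ^ k * infsum (Q k n) UNIV)"
      unfolding U_def probT_def probTS_def Q_def[symmetric] q_def[symmetric]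
      by (rule suminf_finite) (auto simp: Q0f)
    define u where "u = U r p N lam n"
    have upos: "u > 0" using Upos u_def by simp
    have UUnn: "UU r p N lam n x \<ge> 0" for x
      unfolding UUeq using lam by (intro sum_nonneg mult_nonneg_nonneg Qnn) auto
    have CM: "0 \<le> C / M^2" using Cpos by simp
    show "infsum (\<lambda>x. UU r p N lam n x / U r p N lam n) {x. znorm x > M * sqrt (real n)} \<le> C / M^2"
    proof (cases "n = 0")
      case True
      have "UU r p N lam n x = 0" if "znorm x > M * sqrt (real n)" for x
      proof -
        have "x \<noteq> (\<lambda>_. 0)" using that True by (auto simp: znorm_def)
        then show ?thesis unfolding UUeq using True by (simp add: Q_def)
      qed
      then have "infsum (\<lambda>x. UU r p N lam n x / U r p N lam n) {x. znorm x > M * sqrt (real n)} = 0"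
        by (intro infsum_0) auto
      then show ?thesis using CM by simp
    next
      case False
      define S :: "('d \<Rightarrow> int) set" where "S = {x. znorm x > M * sqrt (real n)}"
      define D where "D = M^2 * real n * u"
      have Dpos: "D > 0" unfolding D_def using False Mpos upos by simp
      define g where "g x = sqn x * UU r p N lam n x / D" for x
      define W where "W = (\<Sum>k\<le>n. lam ^ k * infsum (\<lambda>x. sqn x * Q k n x) UNIV)"
      have g_hs: "(g has_sum W / D) UNIV"
      proof -
        have "((\<lambda>x. \<Sum>k\<le>n. lam ^ k * (sqn x * Q k n x)) has_sum W) UNIV"
          unfolding W_def by (rule has_sum_sum_fun) (auto intro!: has_sum_cmult_right has_sum_infsum QVs)
        then have "((\<lambda>x. (\<Sum>k\<le>n. lam ^ k * (sqn x * Q k n x)) * (1 / D)) has_sum W * (1 / D)) UNIV"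
          by (rule has_sum_cmult_left)
        moreover have "(\<lambda>x. (\<Sum>k\<le>n. lam ^ k * (sqn x * Q k n x)) * (1 / D)) = g"
          unfolding g_def UUeq by (auto simp: sum_distrib_left sum_divide_distrib algebra_simps)
        ultimately show ?thesis by simp
      qed
      have Wb: "W \<le> K * real n * u"
      proof -
        have "W \<le> (\<Sum>k\<le>n. lam ^ k * (K * real n * infsum (Q k n) UNIV))"
          unfolding W_def using lam by (intro sum_mono mult_left_mono QVb) auto
        also have "\<dots> = K * real n * u"
          unfolding u_def Ueq by (simp add: sum_distrib_left algebra_simps)
        finally show ?thesis .
      qed
      have f_s: "(\<lambda>x. UU r p N lam n x / U r p N lam n) summable_on S"
      proof -
        have "((\<lambda>x. \<Sum>k\<le>n. lam ^ k * Q k n x) has_sum (\<Sum>k\<le>n. lam ^ k * infsum (Q k n) UNIV)) UNIV"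
          by (rule has_sum_sum_fun) (auto intro!: has_sum_cmult_right has_sum_infsum Qs)
        then have "((\<lambda>x. (\<Sum>k\<le>n. lam ^ k * Q k n x) * (1/u)) summable_on UNIV)"
          using has_sum_cmult_left summable_on_def by blast
        then have "(\<lambda>x. UU r p N lam n x / U r p N lam n) summable_on UNIV"
          unfolding UUeq u_def by simp
        then show ?thesis by (rule summable_on_subset_banach) simp
      qed
      have g_s: "g summable_on UNIV" using g_hs summable_on_def by blast
      have "infsum (\<lambda>x. UU r p N lam n x / U r p N lam n) S \<le> infsum g UNIV"
      proof (rule infsum_mono_neutral[OF f_s g_s])
        fix x assume "x \<in> S \<inter> UNIV"
        then have zx: "znorm x > M * sqrt (real n)" unfolding S_def by simp
        have "M * sqrt (real n) \<ge> 0" using Mpos by simp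
        then have "(M * sqrt (real n))^2 < (znorm x)^2" using zx by (intro power_strict_mono) auto
        then have sx: "M^2 * real n < sqn x" unfolding znorm_sq by (simp add: power_mult_distrib)
        have "UU r p N lam n x / u = (M^2 * real n) * UU r p N lam n x / D"
          unfolding D_def using False Mpos upos by (simp add: field_simps)
        also have "\<dots> \<le> sqn x * UU r p N lam n x / D"
          using sx UUnn Dpos by (intro divide_right_mono mult_right_mono) auto
        finally show "UU r p N lam n x / U r p N lam n \<le> g x" unfolding g_def u_def by simp
      next
        fix x show "0 \<le> g x" unfolding g_def using UUnn sqn_nonneg Dpos
          by (intro divide_nonneg_pos mult_nonneg_nonneg) auto
      qed auto
      also have "infsum g UNIV = W / D" using g_hs by (rule infsumI)
      also have "\<dots> \<le> K * real n * u / D" using Wb Dpos by (simp add: divide_right_mono)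
      also have "\<dots> = K / M^2" unfolding D_def using False upos Mpos by (simp add: field_simps)
      also have "\<dots> \<le> C / M^2" unfolding C_def using Mpos by (intro divide_right_mono) auto
      finally show ?thesis unfolding S_def .
    qed
  qed
qed

end
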